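(* Let $\mathfrak g=\mathfrak k\oplus\mathfrak m$ be a Pauli-spanned Cartan decomposition of a Lie algebra $\mathfrak g\subseteq\mathfrak{su}(2^n)$, and let $\mathfrak b=\mathrm{span}_{i\mathbb R}\{\tilde b_1,\dots,\tilde b_d\}\subseteq\mathfrak m$ be an Abelian subalgebra spanned by $i$ times pairwise commuting Pauli strings $\tilde b_1,\dots,\tilde b_d\in\tilde{\mathfrak m}$, all belonging to the same connected component of the frustration graph of $\mathfrak g$. Then the $\tilde b_j$ can be ordered so that $$|\tilde{\mathfrak k}^1(\mathfrak b)|>|\tilde{\mathfrak k}^2_1(\mathfrak b)|\ge|\tilde{\mathfrak k}^3_{12}(\mathfrak b)|\ge\cdots\ge|\tilde{\mathfrak k}^d_{1\dots d-1}(\mathfrak b)|,$$ where equality occurs only between empty sets (so the non-empty sets form a strictly decreasing initial segment and all empty sets come at the end). Moreover, if the first $r$ sets are non-empty, the same inequalities hold for any permutation of the first $r$ indices; a general permutation of the indices may cause empty sets to appear earlier in the sequence but does not change the sizes or order of the non-empty sets.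
   Context: Pauli strings on $n$ qubits are tensor products of $I,X,Y,Z$, not all identity; two Pauli strings either commute or anticommute. A Pauli-spanned Cartan decomposition is $\mathfrak g=\mathfrak k\oplus\mathfrak m$ with $\mathfrak k=\mathrm{span}_{i\mathbb R}\tilde{\mathfrak k}$, $\mathfrak m=\mathrm{span}_{i\mathbb R}\tilde{\mathfrak m}$, $\mathfrak g=\mathrm{span}_{i\mathbb R}\tilde{\mathfrak g}$, $\tilde{\mathfrak g}=\tilde{\mathfrak k}\sqcup\tilde{\mathfrak m}$ sets of Pauli strings, and $[\mathfrak k,\mathfrak k]\subseteq\mathfrak k$, $[\mathfrak m,\mathfrak m]\subseteq\mathfrak k$, $[\mathfrak k,\mathfrak m]\subseteq\mathfrak m$. The frustration graph of $\mathfrak g$ has vertex set $\tilde{\mathfrak g}$ and an edge between $\sigma,\tau$ iff $[\sigma,\tau]\ne0$. For disjoint index lists, $\tilde{\mathfrak k}^{i_1i_2\dots}_{j_1j_2\dots}(\mathfrak b)$ is the set of $\tilde k\in\tilde{\mathfrak k}$ that anticommute with every $\tilde b_{i_p}$ and commute with every $\tilde b_{j_q}$ (no condition for other indices); $\tilde{\mathfrak k}^r_{1\dots r-1}$ thus consists of elements commuting with $\tilde b_1,\dots,\tilde b_{r-1}$ and anticommuting with $\tilde b_r$. *)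

theory Defs
  imports Main "HOL-Library.Multiset"
begin

text \<open>Single-qubit Pauli operators (I, X, Y, Z); phases are ignored.\<close>
datatype pauli = PI | PX | PY | PZ

text \<open>Product of single-qubit Paulis up to a phase (Klein four-group).\<close>
fun pmul :: "pauli \<Rightarrow> pauli \<Rightarrow> pauli" where
  "pmul PI q = q"
| "pmul p PI = p"
| "pmul PX PX = PI" | "pmul PY PY = PI" | "pmul PZ PZ = PI"
| "pmul PX PY = PZ" | "pmul PY PX = PZ"
| "pmul PY PZ = PX" | "pmul PZ PY = PX"
| "pmul PZ PX = PY" | "pmul PX PZ = PY"

definition pauli_strings :: "nat \<Rightarrow> pauli list set" where
  "pauli_strings n = {s. length s = n \<and> (\<exists>c\<in>set s. c \<noteq> PI)}"

definition anticommute :: "pauli list \<Rightarrow> pauli list \<Rightarrow> bool" where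
  "anticommute s t =
     odd (card {i. i < length s \<and> i < length t \<and> s!i \<noteq> PI \<and> t!i \<noteq> PI \<and> s!i \<noteq> t!i})"

abbreviation commute :: "pauli list \<Rightarrow> pauli list \<Rightarrow> bool" where
  "commute s t \<equiv> \<not> anticommute s t"

text \<open>Product of Pauli strings up to phase. For anticommuting s, t the commutator
  [s,t] = 2 s t is a nonzero multiple of this Pauli string.\<close>
definition smul :: "pauli list \<Rightarrow> pauli list \<Rightarrow> pauli list" where
  "smul s t = map2 pmul s t"

text \<open>Pauli-spanned Cartan decomposition g = k + m with k = span_iR K, m = span_iR M.
  By linear independence of Pauli strings, the bracket conditions on the spans are
  equivalent to the following closure conditions on the generating sets
  (commuting strings have zero bracket).\<close>
definition pauli_cartan :: "nat \<Rightarrow> pauli list set \<Rightarrow> pauli list set \<Rightarrow> bool" where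
  "pauli_cartan n K M \<longleftrightarrow>
     K \<subseteq> pauli_strings n \<and> M \<subseteq> pauli_strings n \<and> K \<inter> M = {} \<and>
     (\<forall>a\<in>K. \<forall>b\<in>K. anticommute a b \<longrightarrow> smul a b \<in> K) \<and>
     (\<forall>a\<in>M. \<forall>b\<in>M. anticommute a b \<longrightarrow> smul a b \<in> K) \<and>
     (\<forall>a\<in>K. \<forall>b\<in>M. anticommute a b \<longrightarrow> smul a b \<in> M)"

definition frustration_edge :: "pauli list set \<Rightarrow> pauli list \<Rightarrow> pauli list \<Rightarrow> bool" where
  "frustration_edge G s t \<longleftrightarrow> s \<in> G \<and> t \<in> G \<and> anticommute s t"

definition same_component :: "pauli list set \<Rightarrow> pauli list \<Rightarrow> pauli list \<Rightarrow> bool" where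
  "same_component G s t \<longleftrightarrow> s \<in> G \<and> t \<in> G \<and> (frustration_edge G)\<^sup>*\<^sup>* s t"

text \<open>For an ordering bs = [b_1,...,b_d] (0-based indices here), the set
  k^{r}_{1...r-1}(b): elements of K anticommuting with b_r and commuting with
  b_1,...,b_{r-1}.\<close>
definition kset :: "pauli list set \<Rightarrow> pauli list list \<Rightarrow> nat \<Rightarrow> pauli list set" where
  "kset K bs r = {k \<in> K. anticommute k (bs!r) \<and> (\<forall>j<r. commute k (bs!j))}"

definition kseq :: "pauli list set \<Rightarrow> pauli list list \<Rightarrow> nat list" where
  "kseq K bs = map (\<lambda>r. card (kset K bs r)) [0..<length bs]"

definition good_chain :: "nat list \<Rightarrow> bool" where
  "good_chain xs \<longleftrightarrow>
     (2 \<le> length xs \<longrightarrow> xs!1 < xs!0) \<and>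
     (\<forall>r. Suc r < length xs \<longrightarrow> xs!(Suc r) \<le> xs!r \<and> (xs!(Suc r) = xs!r \<longrightarrow> xs!r = 0))"

end

theory Submission
  imports Defs
begin

definition af :: "pauli \<Rightarrow> pauli \<Rightarrow> bool" where
  "af p q = (p \<noteq> PI \<and> q \<noteq> PI \<and> p \<noteq> q)"

lemma af_pmul: "af (pmul p q) r = (af p r \<noteq> af q r)"
  by (cases p; cases q; cases r) (auto simp: af_def)

lemma pmul_comm: "pmul p q = pmul q p"
  by (cases p; cases q) auto

lemma pmul_cancel: "pmul (pmul p q) q = p"
  by (cases p; cases q) auto

lemma anti_def2: "anticommute s t = odd (card {i. i < length s \<and> i < length t \<and> af (s!i) (t!i)})"
  unfolding anticommute_def af_def by simp

lemma anti_sym: "anticommute s t = anticommute t s"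
proof -
  have "{i. i < length s \<and> i < length t \<and> af (s!i) (t!i)} = {i. i < length t \<and> i < length s \<and> af (t!i) (s!i)}"
    by (auto simp: af_def)
  then show ?thesis unfolding anti_def2 by simp
qed

lemma anti_self: "\<not> anticommute s s"
  unfolding anti_def2 af_def by simp

lemma length_smul: "length (smul x y) = min (length x) (length y)"
  by (simp add: smul_def)

lemma nth_smul: "i < length x \<Longrightarrow> i < length y \<Longrightarrow> smul x y ! i = pmul (x!i) (y!i)"
  by (simp add: smul_def)

lemma smul_comm: "smul x y = smul y x"
  by (rule nth_equalityI) (auto simp: length_smul nth_smul pmul_comm)

lemma smul_cancel: "length x = length y \<Longrightarrow> smul (smul x y) y = x"
  by (rule nth_equalityI) (auto simp: length_smul nth_smul pmul_cancel)

lemma card_symdiff_parity: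
  assumes "finite A" "finite B"
  shows "odd (card {i. (i\<in>A) \<noteq> (i\<in>B)}) = (odd (card A) \<noteq> odd (card B))"
proof -
  have e: "{i. (i\<in>A) \<noteq> (i\<in>B)} = (A - B) \<union> (B - A)" by auto
  have c1: "card {i. (i\<in>A) \<noteq> (i\<in>B)} = card (A - B) + card (B - A)"
    unfolding e using assms by (intro card_Un_disjoint) auto
  have c2: "card A = card (A - B) + card (A \<inter> B)"
  proof -
    have "A = (A - B) \<union> (A \<inter> B)" by auto
    then have "card A = card ((A - B) \<union> (A \<inter> B))" by simp
    also have "\<dots> = card (A - B) + card (A \<inter> B)" using assms by (intro card_Un_disjoint) auto
    finally show ?thesis .
  qed
  have c3: "card B = card (B - A) + card (A \<inter> B)"
  proof -
    have "B = (B - A) \<union> (A \<inter> B)" by auto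
    then have "card B = card ((B - A) \<union> (A \<inter> B))" by simp
    also have "\<dots> = card (B - A) + card (A \<inter> B)" using assms by (intro card_Un_disjoint) auto
    finally show ?thesis .
  qed
  show ?thesis using c1 c2 c3 by presburger
qed

lemma anti_smul:
  assumes "length x = length c" "length y = length c"
  shows "anticommute (smul x y) c = (anticommute x c \<noteq> anticommute y c)"
proof -
  let ?A = "{i. i < length x \<and> i < length c \<and> af (x!i) (c!i)}"
  let ?B = "{i. i < length y \<and> i < length c \<and> af (y!i) (c!i)}"
  have eq: "{i. i < length (smul x y) \<and> i < length c \<and> af (smul x y!i) (c!i)} = {i. (i\<in>?A) \<noteq> (i\<in>?B)}"
    using assms by (auto simp: length_smul nth_smul af_pmul)
  have f: "finite ?A" "finite ?B" by auto
  show ?thesis unfolding anti_def2 eq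
    using card_symdiff_parity[OF f] by simp
qed

lemma anti_smul2:
  assumes "length x = length c" "length y = length c"
  shows "anticommute c (smul x y) = (anticommute c x \<noteq> anticommute c y)"
  using anti_smul[OF assms] anti_sym by metis


lemma finite_pauli_UNIV: "finite (UNIV :: pauli set)"
proof -
  have e: "(UNIV :: pauli set) = {PI, PX, PY, PZ}"
  proof (rule set_eqI)
    fix x :: pauli show "x \<in> UNIV \<longleftrightarrow> x \<in> {PI, PX, PY, PZ}" by (cases x) auto
  qed
  show ?thesis by (subst e) simp
qed

lemma finite_pauli_strings: "finite (pauli_strings n)"
proof -
  have "pauli_strings n \<subseteq> {xs. set xs \<subseteq> UNIV \<and> length xs = n}"
    by (auto simp: pauli_strings_def)
  then show ?thesis using finite_lists_length_eq[OF finite_pauli_UNIV] finite_subset by blast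
qed

definition tv :: "pauli list \<Rightarrow> pauli list \<Rightarrow> pauli list" where
  "tv h g = (if anticommute h g then smul h g else g)"

lemma tv_len: "length h = m \<Longrightarrow> length g = m \<Longrightarrow> length (tv h g) = m"
  by (simp add: tv_def length_smul)

lemma tv_inv:
  assumes "length h = length g" shows "tv h (tv h g) = g"
proof (cases "anticommute h g")
  case True
  have e1: "anticommute h (smul h g) = (anticommute h h \<noteq> anticommute h g)"
    by (rule anti_smul2) (use assms in auto)
  have a: "anticommute h (smul h g)"
    unfolding e1 using True anti_self[of h] by blast
  have e2: "smul h g = smul g h" by (rule smul_comm)
  have e3: "smul h (smul g h) = smul (smul g h) h" by (rule smul_comm)
  have e4: "smul (smul g h) h = g" using smul_cancel[of g h] assms by simp
  have "tv h (tv h g) = smul h (smul h g)" using True a by (simp add: tv_def)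
  also have "\<dots> = g" unfolding e2 e3 e4 ..
  finally show ?thesis .
next
  case False then show ?thesis by (simp add: tv_def)
qed

lemma tv_anti:
  assumes "length h = length c" "length g = length c" "length x = length c"
  shows "anticommute (tv h g) (tv h x) = anticommute g x"
proof -
  have s1: "anticommute (smul h g) y = (anticommute h y \<noteq> anticommute g y)" if "length y = length c" for y
    using anti_smul[of h y g] assms that by simp
  have s2: "anticommute y (smul h x) = (anticommute y h \<noteq> anticommute y x)" if "length y = length c" for y
    using anti_smul2[of h y x] assms that by simp
  have l: "length (smul h x) = length c" using assms by (simp add: length_smul)
  show ?thesis
    unfolding tv_def using s1[OF l] s1[OF assms(3)] s2[OF assms(1)] s2[OF assms(2)]
      anti_self[of h] anti_sym[of g h] anti_sym[of x h] by auto
qed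

definition KT :: "pauli list set \<Rightarrow> pauli list set \<Rightarrow> pauli list set" where
  "KT K T = {k \<in> K. \<forall>t\<in>T. \<not> anticommute k t}"

definition cnt :: "pauli list set \<Rightarrow> pauli list set \<Rightarrow> pauli list \<Rightarrow> nat" where
  "cnt K T b = card {k \<in> KT K T. anticommute k b}"

fun cs :: "pauli list set \<Rightarrow> pauli list set \<Rightarrow> pauli list list \<Rightarrow> nat list" where
  "cs K T [] = []"
| "cs K T (b # l) = cnt K T b # cs K (insert b T) l"

lemma length_cs: "length (cs K T l) = length l"
  by (induction l arbitrary: T) auto

lemma cs_append: "cs K T (xs @ ys) = cs K T xs @ cs K (T \<union> set xs) ys"
  by (induction xs arbitrary: T) auto

lemma cs_nth:
  "r < length l \<Longrightarrow> cs K T l ! r =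
     card {k \<in> K. anticommute k (l!r) \<and> (\<forall>t\<in>T. \<not> anticommute k t) \<and> (\<forall>j<r. \<not> anticommute k (l!j))}"
proof (induction l arbitrary: T r)
  case Nil then show ?case by simp
next
  case (Cons b l)
  show ?case
  proof (cases r)
    case 0 then show ?thesis by (simp add: cnt_def KT_def; intro arg_cong[where f=card]; auto)
  next
    case (Suc r')
    then have "r' < length l" using Cons.prems by simp
    then have "cs K T (b # l) ! r = card {k \<in> K. anticommute k (l!r') \<and> (\<forall>t\<in>insert b T. \<not> anticommute k t) \<and> (\<forall>j<r'. \<not> anticommute k (l!j))}"
      using Cons.IH Suc by simp
    also have "\<dots> = card {k \<in> K. anticommute k ((b#l)!r) \<and> (\<forall>t\<in>T. \<not> anticommute k t) \<and> (\<forall>j<r. \<not> anticommute k ((b#l)!j))}"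
      using Suc by (intro arg_cong[where f=card] Collect_cong) (auto simp: less_Suc_eq_0_disj)
    finally show ?thesis .
  qed
qed

lemma kseq_cs: "kseq K bs = cs K {} bs"
  by (rule nth_equalityI) (auto simp: kseq_def kset_def length_cs cs_nth conj_commute)

definition Qc :: "nat list \<Rightarrow> bool" where
  "Qc xs \<longleftrightarrow> (\<forall>r. Suc r < length xs \<longrightarrow> xs!(Suc r) \<le> xs!r \<and> (xs!(Suc r) = xs!r \<longrightarrow> xs!r = 0))"

lemma Qc_Cons: "Qc (x # xs) \<longleftrightarrow> Qc xs \<and> (xs \<noteq> [] \<longrightarrow> hd xs \<le> x \<and> (hd xs = x \<longrightarrow> x = 0))"
proof
  assume q: "Qc (x # xs)"
  have "Qc xs" unfolding Qc_def
  proof (intro allI impI)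
    fix r assume "Suc r < length xs"
    then show "xs!(Suc r) \<le> xs!r \<and> (xs!(Suc r) = xs!r \<longrightarrow> xs!r = 0)"
      using q[unfolded Qc_def, rule_format, of "Suc r"] by simp
  qed
  moreover have "xs \<noteq> [] \<longrightarrow> hd xs \<le> x \<and> (hd xs = x \<longrightarrow> x = 0)"
    using q[unfolded Qc_def, rule_format, of 0] by (cases xs) auto
  ultimately show "Qc xs \<and> (xs \<noteq> [] \<longrightarrow> hd xs \<le> x \<and> (hd xs = x \<longrightarrow> x = 0))" by blast
next
  assume a: "Qc xs \<and> (xs \<noteq> [] \<longrightarrow> hd xs \<le> x \<and> (hd xs = x \<longrightarrow> x = 0))"
  show "Qc (x # xs)" unfolding Qc_def
  proof (intro allI impI)
    fix r assume r: "Suc r < length (x # xs)"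
    show "(x#xs)!(Suc r) \<le> (x#xs)!r \<and> ((x#xs)!(Suc r) = (x#xs)!r \<longrightarrow> (x#xs)!r = 0)"
    proof (cases r)
      case 0 then show ?thesis using a r by (cases xs) auto
    next
      case (Suc r') then show ?thesis using a r unfolding Qc_def by auto
    qed
  qed
qed

locale PC =
  fixes n :: nat and K M B :: "pauli list set"
  assumes cartan: "pauli_cartan n K M"
    and B_sub: "B \<subseteq> M"
    and B_comm: "\<forall>a\<in>B. \<forall>b\<in>B. commute a b"
    and B_conn: "\<forall>a\<in>B. \<forall>b\<in>B. same_component (K \<union> M) a b"
begin

lemma lenK: "g \<in> K \<Longrightarrow> length g = n"
  using cartan by (auto simp: pauli_cartan_def pauli_strings_def)
lemma lenM: "g \<in> M \<Longrightarrow> length g = n"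
  using cartan by (auto simp: pauli_cartan_def pauli_strings_def)
lemma lenG: "g \<in> K \<union> M \<Longrightarrow> length g = n"
  using lenK lenM by blast
lemma BM: "b \<in> B \<Longrightarrow> b \<in> M" using B_sub by blast
lemma lenB: "b \<in> B \<Longrightarrow> length b = n" using BM lenM by blast
lemma finK: "finite K"
  using cartan finite_pauli_strings finite_subset by (auto simp: pauli_cartan_def)
lemma finM: "finite M"
  using cartan finite_pauli_strings finite_subset by (auto simp: pauli_cartan_def)
lemma finB: "finite B" using finM B_sub finite_subset by blast

lemma closKK: "a \<in> K \<Longrightarrow> b \<in> K \<Longrightarrow> anticommute a b \<Longrightarrow> smul a b \<in> K"
  using cartan by (auto simp: pauli_cartan_def)
lemma closMM: "a \<in> M \<Longrightarrow> b \<in> M \<Longrightarrow> anticommute a b \<Longrightarrow> smul a b \<in> K"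
  using cartan by (auto simp: pauli_cartan_def)
lemma closKM: "a \<in> K \<Longrightarrow> b \<in> M \<Longrightarrow> anticommute a b \<Longrightarrow> smul a b \<in> M"
  using cartan by (auto simp: pauli_cartan_def)
lemma closMK: "a \<in> M \<Longrightarrow> b \<in> K \<Longrightarrow> anticommute a b \<Longrightarrow> smul a b \<in> M"
  using closKM[of b a] smul_comm[of a b] anti_sym[of a b] by simp
lemma closG: "a \<in> K \<union> M \<Longrightarrow> b \<in> K \<union> M \<Longrightarrow> anticommute a b \<Longrightarrow> smul a b \<in> K \<union> M"
  using closKK closMM closKM closMK by blast

lemma antiG: "x \<in> K \<union> M \<Longrightarrow> y \<in> K \<union> M \<Longrightarrow> c \<in> K \<union> M \<Longrightarrow>
    anticommute (smul x y) c = (anticommute x c \<noteq> anticommute y c)"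
  using anti_smul lenG by metis

lemma Bcomm: "a \<in> B \<Longrightarrow> b \<in> B \<Longrightarrow> \<not> anticommute a b"
  using B_comm by blast

lemma path:
  assumes "(frustration_edge (K \<union> M))\<^sup>*\<^sup>* s t" "s \<in> K \<union> M"
  shows "s = t \<or> anticommute s t \<or> (\<exists>h\<in>K \<union> M. anticommute h s \<and> anticommute h t)"
  using assms(1)
proof (induction rule: rtranclp_induct)
  case base then show ?case by simp
next
  case (step y z)
  have yz: "y \<in> K \<union> M" "z \<in> K \<union> M" "anticommute y z"
    using step.hyps(2) by (auto simp: frustration_edge_def)
  from step.IH consider (e) "s = y" | (a) "anticommute s y"
    | (c) h where "h \<in> K \<union> M" "anticommute h s" "anticommute h y" by blast
  then show ?case
  proof cases
    case e then show ?thesis using yz by auto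
  next
    case a then show ?thesis using yz anti_sym by blast
  next
    case c
    show ?thesis
    proof (cases "anticommute h z")
      case True then show ?thesis using c by blast
    next
      case hz: False
      show ?thesis
      proof (cases "anticommute y s")
        case True then show ?thesis using yz by blast
      next
        case False
        have m: "smul h y \<in> K \<union> M" using closG c yz by blast
        have "anticommute (smul h y) s" using antiG[OF c(1) yz(1) assms(2)] c False by simp
        moreover have "anticommute (smul h y) z" using antiG[OF c(1) yz(1) yz(2)] hz yz by simp
        ultimately show ?thesis using m by blast
      qed
    qed
  qed
qed

lemma base_cn:
  assumes "b \<in> B" "b' \<in> B" "b \<noteq> b'"
  shows "\<exists>h\<in>K \<union> M. anticommute h b \<and> anticommute h b'"
proof -
  have "same_component (K \<union> M) b b'" using B_conn assms by blast
  then have "(frustration_edge (K \<union> M))\<^sup>*\<^sup>* b b'" "b \<in> K \<union> M"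
    by (auto simp: same_component_def)
  from path[OF this] show ?thesis using assms Bcomm by blast
qed

lemma B_KT: "T \<subseteq> B \<Longrightarrow> b \<in> B \<Longrightarrow> b \<in> KT (K \<union> M) T"
  unfolding KT_def using BM Bcomm by (auto simp: anti_sym)

lemma KT_empty: "KT X {} = X" by (simp add: KT_def)

lemma KT_sub: "KT K T \<subseteq> KT (K \<union> M) T" by (auto simp: KT_def)

lemma KT_insert: "KT X (insert a T) = {k \<in> KT X T. \<not> anticommute k a}"
  by (auto simp: KT_def)

lemma smul_KT:
  assumes "T \<subseteq> B" "g \<in> KT (K \<union> M) T" "x \<in> KT (K \<union> M) T" "anticommute g x"
  shows "smul g x \<in> KT (K \<union> M) T"
proof -
  have g: "g \<in> K \<union> M" and x: "x \<in> K \<union> M" using assms by (auto simp: KT_def)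
  have "smul g x \<in> K \<union> M" using closG g x assms(4) by blast
  moreover have "\<not> anticommute (smul g x) t" if "t \<in> T" for t
  proof -
    have t: "t \<in> K \<union> M" using that assms(1) BM by blast
    show ?thesis using antiG[OF g x t] assms that by (auto simp: KT_def)
  qed
  ultimately show ?thesis by (auto simp: KT_def)
qed

lemma mkx:
  assumes T: "T \<subseteq> B" and c: "c \<in> B" and h: "h \<in> KT (K \<union> M) T" and g: "g \<in> KT (K \<union> M) T"
    and hc: "anticommute h c" and gc: "anticommute g c"
  shows "\<exists>x\<in>KT (K \<union> M) T. \<forall>w\<in>B. anticommute x w = (anticommute h w \<noteq> anticommute g w)"
proof -
  have hG: "h \<in> K \<union> M" and gG: "g \<in> K \<union> M" using h g by (auto simp: KT_def)
  have cG: "c \<in> K \<union> M" using c BM by blast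
  have wG: "w \<in> B \<Longrightarrow> w \<in> K \<union> M" for w using BM by blast
  show ?thesis
  proof (cases "anticommute h g")
    case True
    show ?thesis
      by (rule bexI[of _ "smul h g"]) (use smul_KT[OF T h g True] antiG[OF hG gG wG] in auto)
  next
    case False
    have hcK: "smul h c \<in> KT (K \<union> M) T" using smul_KT[OF T h B_KT[OF T c] hc] .
    have hcG: "smul h c \<in> K \<union> M" using hcK by (auto simp: KT_def)
    have "anticommute (smul h c) g" using antiG[OF hG cG gG] False gc anti_sym[of c g] by simp
    then have xK: "smul (smul h c) g \<in> KT (K \<union> M) T" using smul_KT[OF T hcK g] by blast
    show ?thesis
    proof (rule bexI[OF _ xK], intro ballI)
      fix w assume w: "w \<in> B"
      show "anticommute (smul (smul h c) g) w = (anticommute h w \<noteq> anticommute g w)"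
        using antiG[OF hcG gG wG[OF w]] antiG[OF hG cG wG[OF w]] Bcomm[OF c w] by simp
    qed
  qed
qed

lemma CN:
  assumes "T \<subseteq> B" "b \<in> B" "b' \<in> B" "g1 \<in> KT (K \<union> M) T" "anticommute g1 b"
    "g2 \<in> KT (K \<union> M) T" "anticommute g2 b'"
  shows "\<exists>h\<in>KT (K \<union> M) T. anticommute h b \<and> anticommute h b'"
proof -
  have "finite T" using assms(1) finB finite_subset by blast
  then show ?thesis using assms
  proof (induction T arbitrary: g1 g2 rule: finite_induct)
    case empty
    show ?case
    proof (cases "b = b'")
      case True then show ?thesis using empty by blast
    next
      case False
      then show ?thesis using base_cn[OF empty.prems(2,3)] unfolding KT_empty by blast
    qed
  next
    case (insert a T)
    have TB: "T \<subseteq> B" and aB: "a \<in> B" using insert.prems by auto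
    have g1T: "g1 \<in> KT (K \<union> M) T" and g1a: "\<not> anticommute g1 a"
      using insert.prems(4) by (auto simp: KT_insert)
    have g2T: "g2 \<in> KT (K \<union> M) T" and g2a: "\<not> anticommute g2 a"
      using insert.prems(6) by (auto simp: KT_insert)
    obtain h where h: "h \<in> KT (K \<union> M) T" "anticommute h b" "anticommute h b'"
      using insert.IH[OF TB insert.prems(2,3) g1T insert.prems(5) g2T insert.prems(7)] by blast
    show ?case
    proof (cases "anticommute h a")
      case False then show ?thesis using h by (auto simp: KT_insert)
    next
      case ha: True
      show ?thesis
      proof (cases "anticommute g1 b' \<or> anticommute g2 b")
        case True then show ?thesis using insert.prems by blast
      next
        case False
        obtain x where x: "x \<in> KT (K \<union> M) T" "\<forall>w\<in>B. anticommute x w = (anticommute h w \<noteq> anticommute g1 w)"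
          using mkx[OF TB insert.prems(2) h(1) g1T h(2) insert.prems(5)] by blast
        obtain y where y: "y \<in> KT (K \<union> M) T" "\<forall>w\<in>B. anticommute y w = (anticommute h w \<noteq> anticommute g2 w)"
          using mkx[OF TB insert.prems(3) h(1) g2T h(3) insert.prems(7)] by blast
        have xa: "anticommute x a" using x(2) aB ha g1a by simp
        have ya: "anticommute y a" using y(2) aB ha g2a by simp
        obtain z where z: "z \<in> KT (K \<union> M) T" "\<forall>w\<in>B. anticommute z w = (anticommute x w \<noteq> anticommute y w)"
          using mkx[OF TB aB x(1) y(1) xa ya] by blast
        have "\<not> anticommute z a" using z(2) aB xa ya by simp
        moreover have "anticommute z b" "anticommute z b'"
          using z(2) x(2) y(2) insert.prems(2,3,5,7) h False by auto
        ultimately show ?thesis using z(1) by (auto simp: KT_insert)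
      qed
    qed
  qed
qed

lemma toK:
  assumes T: "T \<subseteq> B" and h: "h \<in> KT (K \<union> M) T" and b: "b \<in> B" and b': "b' \<in> B"
    and hb: "anticommute h b" and hb': "anticommute h b'"
  shows "\<exists>k\<in>KT K T. anticommute k b \<and> anticommute k b'"
proof (cases "h \<in> K")
  case True then show ?thesis using h hb hb' by (auto simp: KT_def)
next
  case False
  then have hM: "h \<in> M" using h by (auto simp: KT_def)
  have hG: "h \<in> K \<union> M" using hM by blast
  have bG: "b \<in> K \<union> M" using b BM by blast
  have "smul h b \<in> KT (K \<union> M) T" using smul_KT[OF T h B_KT[OF T b] hb] .
  moreover have "smul h b \<in> K" using closMM[OF hM BM[OF b] hb] .
  moreover have "anticommute (smul h b) b" using antiG[OF hG bG bG] hb anti_self[of b] by simp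
  moreover have "anticommute (smul h b) b'" using antiG[OF hG bG] b' BM hb' Bcomm[OF b b'] by auto
  ultimately show ?thesis by (auto simp: KT_def)
qed

lemma CNK:
  assumes T: "T \<subseteq> B" and b: "b \<in> B" and b': "b' \<in> B" and c1: "cnt K T b > 0" and c2: "cnt K T b' > 0"
  shows "\<exists>k\<in>KT K T. anticommute k b \<and> anticommute k b'"
proof -
  obtain g1 where "g1 \<in> KT K T" "anticommute g1 b" using c1 unfolding cnt_def
    by (metis (no_types, lifting) card.empty empty_Collect_eq less_irrefl)
  moreover obtain g2 where "g2 \<in> KT K T" "anticommute g2 b'" using c2 unfolding cnt_def
    by (metis (no_types, lifting) card.empty empty_Collect_eq less_irrefl)
  ultimately obtain h where "h \<in> KT (K \<union> M) T" "anticommute h b" "anticommute h b'"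
    using CN[OF T b b'] KT_sub by blast
  then show ?thesis using toK[OF T _ b b'] by blast
qed

lemma finKT: "finite {k \<in> KT K T. P k}"
  using finK by (auto simp: KT_def)

lemma cnt_le:
  assumes T: "T \<subseteq> B" and b: "b \<in> B" and b': "b' \<in> B" and h: "h \<in> KT K T"
    and hb: "anticommute h b" and hb': "anticommute h b'"
  shows "cnt K T b \<le> cnt K T b'"
proof -
  have hK: "h \<in> K" using h by (auto simp: KT_def)
  have hG: "h \<in> K \<union> M" using hK by blast
  have bG: "b \<in> K \<union> M" and b'G: "b' \<in> K \<union> M" using b b' BM by auto
  define h1 where "h1 = smul h b"
  have h1M: "h1 \<in> M" unfolding h1_def using closKM[OF hK BM[OF b] hb] .
  have h1G: "h1 \<in> K \<union> M" using h1M by blast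
  have h1b': "anticommute h1 b'" unfolding h1_def using antiG[OF hG bG b'G] hb' Bcomm[OF b b'] by simp
  define h' where "h' = smul h1 b'"
  have h'K: "h' \<in> K" unfolding h'_def using closMM[OF h1M BM[OF b'] h1b'] .
  have h'T: "h' \<in> KT K T"
  proof -
    have "\<not> anticommute h' t" if t: "t \<in> T" for t
    proof -
      have tB: "t \<in> B" using t T by blast
      have tG: "t \<in> K \<union> M" using tB BM by blast
      show ?thesis unfolding h'_def h1_def
        using antiG[OF h1G b'G tG] antiG[OF hG bG tG] h t Bcomm[OF b tB] Bcomm[OF b' tB]
        by (simp add: KT_def h1_def)
    qed
    then show ?thesis using h'K by (auto simp: KT_def)
  qed
  have lh: "length h = n" "length h' = n" "length h1 = n" using hK h'K h1M lenK lenM by auto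
  have lb: "length b = n" "length b' = n" using b b' lenB by auto
  define \<phi> where "\<phi> g = tv h' (tv h g)" for g
  have tvK: "tv x g \<in> KT K T" if "x \<in> KT K T" "g \<in> KT K T" for x g
  proof (cases "anticommute x g")
    case True
    have "smul x g \<in> KT (K \<union> M) T" using smul_KT[OF T _ _ True] that KT_sub by blast
    moreover have "smul x g \<in> K" using closKK True that by (auto simp: KT_def)
    ultimately show ?thesis using True by (auto simp: tv_def KT_def)
  next
    case False then show ?thesis using that by (simp add: tv_def)
  qed
  have tvb: "tv h b = h1" using hb by (simp add: tv_def h1_def)
  have tvb': "tv h' b' = h1"
  proof -
    have "anticommute h' b'" unfolding h'_def using antiG[OF h1G b'G b'G] h1b' anti_self[of b'] by simp
    then have "tv h' b' = smul (smul h1 b') b'" by (simp add: tv_def h'_def)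
    also have "\<dots> = h1" using smul_cancel lh lb by simp
    finally show ?thesis .
  qed
  have lenKT: "g \<in> KT K T \<Longrightarrow> length g = n" for g using lenK by (auto simp: KT_def)
  have inj: "inj_on \<phi> {k \<in> KT K T. anticommute k b}"
  proof (rule inj_onI)
    fix x y assume x: "x \<in> {k \<in> KT K T. anticommute k b}" and y: "y \<in> {k \<in> KT K T. anticommute k b}"
      and e: "\<phi> x = \<phi> y"
    have lx: "length x = n" and ly: "length y = n" using x y lenKT by auto
    have "tv h (tv h' (\<phi> x)) = tv h (tv h' (\<phi> y))" using e by simp
    moreover have "tv h (tv h' (\<phi> x)) = x" unfolding \<phi>_def
      using tv_inv tv_len lh lx by metis
    moreover have "tv h (tv h' (\<phi> y)) = y" unfolding \<phi>_def
      using tv_inv tv_len lh ly by metis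
    ultimately show "x = y" by simp
  qed
  have img: "\<phi> ` {k \<in> KT K T. anticommute k b} \<subseteq> {k \<in> KT K T. anticommute k b'}"
  proof
    fix y assume "y \<in> \<phi> ` {k \<in> KT K T. anticommute k b}"
    then obtain g where g: "g \<in> KT K T" "anticommute g b" and y: "y = \<phi> g" by blast
    have lg: "length g = n" using g lenKT by auto
    have "y \<in> KT K T" unfolding y \<phi>_def using tvK[OF h'T tvK[OF h g(1)]] .
    moreover have "anticommute y b'"
    proof -
      have ltg: "length (tv h g) = n" using tv_len lh lg by blast
      have "anticommute y b' = anticommute (tv h' (tv h g)) (tv h' (tv h' b'))"
        unfolding y \<phi>_def using tv_inv lh lb by metis
      also have "\<dots> = anticommute (tv h g) (tv h' b')" using tv_anti[of h' "tv h' b'" "tv h g" "tv h' b'"] tv_len lh lb ltg by metis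
      also have "\<dots> = anticommute (tv h g) (tv h b)" using tvb tvb' by simp
      also have "\<dots> = anticommute g b" using tv_anti[of h b g b] lh lb lg by simp
      finally show ?thesis using g by simp
    qed
    ultimately show "y \<in> {k \<in> KT K T. anticommute k b'}" by blast
  qed
  show ?thesis unfolding cnt_def using card_inj_on_le[OF inj img finKT] .
qed

lemma cnt_same:
  assumes T: "T \<subseteq> B" and b: "b \<in> B" and b': "b' \<in> B" and c1: "cnt K T b > 0" and c2: "cnt K T b' > 0"
  shows "cnt K T b = cnt K T b'"
proof -
  obtain k where "k \<in> KT K T" "anticommute k b" "anticommute k b'" using CNK[OF assms] by blast
  then show ?thesis using cnt_le[OF T b b'] cnt_le[OF T b' b] by (meson antisym)
qed


lemma cnt_insert: "cnt K (insert a T) b = card ({k \<in> KT K T. anticommute k b} - {k \<in> KT K T. anticommute k a})"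
proof -
  have "{k \<in> KT K (insert a T). anticommute k b} = {k \<in> KT K T. anticommute k b} - {k \<in> KT K T. anticommute k a}"
    unfolding KT_insert by blast
  then show ?thesis unfolding cnt_def by simp
qed

lemma cnt_pos: "cnt K T b > 0 \<longleftrightarrow> (\<exists>k\<in>KT K T. anticommute k b)"
proof -
  have "finite {k \<in> KT K T. anticommute k b}" by (rule finKT)
  then have "card {k \<in> KT K T. anticommute k b} > 0 \<longleftrightarrow> {k \<in> KT K T. anticommute k b} \<noteq> {}"
    by (simp add: card_gt_0_iff)
  also have "\<dots> \<longleftrightarrow> (\<exists>k\<in>KT K T. anticommute k b)" by blast
  finally show ?thesis unfolding cnt_def .
qed

lemma strict:
  assumes T: "T \<subseteq> B" and a: "a \<in> B" and b: "b \<in> B" and ca: "cnt K T a > 0"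
  shows "cnt K (insert a T) b < cnt K T a"
proof (cases "cnt K (insert a T) b = 0")
  case True then show ?thesis using ca by simp
next
  case False
  then obtain k where "k \<in> KT K (insert a T)" "anticommute k b" using cnt_pos by blast
  then have "k \<in> KT K T" "anticommute k b" by (auto simp: KT_insert)
  then have cb: "cnt K T b > 0" using cnt_pos by blast
  obtain k0 where k0: "k0 \<in> KT K T" "anticommute k0 a" "anticommute k0 b" using CNK[OF T a b ca cb] by blast
  have "({k \<in> KT K T. anticommute k b} - {k \<in> KT K T. anticommute k a}) \<subset> {k \<in> KT K T. anticommute k b}"
    using k0 by blast
  then have "cnt K (insert a T) b < cnt K T b"
    unfolding cnt_insert using psubset_card_mono[OF finKT] by (simp add: cnt_def)
  then show ?thesis using cnt_same[OF T a b ca cb] by simp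
qed

lemma swap:
  assumes T: "T \<subseteq> B" and a: "a \<in> B" and b: "b \<in> B"
  shows "filter (\<lambda>x. x \<noteq> 0) [cnt K T a, cnt K (insert a T) b] =
         filter (\<lambda>x. x \<noteq> 0) [cnt K T b, cnt K (insert b T) a]"
proof -
  let ?A = "{k \<in> KT K T. anticommute k a}"
  let ?B = "{k \<in> KT K T. anticommute k b}"
  have fA: "finite ?A" and fB: "finite ?B" using finKT by auto
  have ia: "cnt K (insert a T) b = card (?B - ?A)" by (rule cnt_insert)
  have ib: "cnt K (insert b T) a = card (?A - ?B)" by (rule cnt_insert)
  have ca: "cnt K T a = card ?A" and cb: "cnt K T b = card ?B" by (simp_all add: cnt_def)
  show ?thesis
  proof (cases "?A = {}")
    case True
    have "?B - ?A = ?B" "?A - ?B = {}" using True by blast+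
    then have "cnt K T a = 0" "cnt K (insert a T) b = cnt K T b" "cnt K (insert b T) a = 0"
      using ia ib ca cb True by simp_all
    then show ?thesis by simp
  next
    case nA: False
    show ?thesis
    proof (cases "?B = {}")
      case True
      have "?A - ?B = ?A" "?B - ?A = {}" using True by blast+
      then have "cnt K T b = 0" "cnt K (insert b T) a = cnt K T a" "cnt K (insert a T) b = 0"
        using ia ib ca cb True by simp_all
      then show ?thesis by simp
    next
      case nB: False
      have pa: "cnt K T a > 0" using ca nA fA card_gt_0_iff by auto
      have pb: "cnt K T b > 0" using cb nB fB card_gt_0_iff by auto
      have e: "card ?A = card ?B" using cnt_same[OF T a b pa pb] ca cb by simp
      have "card (?B - ?A) = card ?B - card (?B \<inter> ?A)" using fB by (intro card_Diff_subset_Int) auto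
      moreover have "card (?A - ?B) = card ?A - card (?A \<inter> ?B)" using fA by (intro card_Diff_subset_Int) auto
      moreover have "?A \<inter> ?B = ?B \<inter> ?A" by blast
      ultimately have "card (?B - ?A) = card (?A - ?B)" using e by simp
      then show ?thesis using ia ib ca cb e by simp
    qed
  qed
qed

lemma zero_step: "cnt K T b = 0 \<Longrightarrow> KT K (insert b T) = KT K T"
  using cnt_pos[of T b] by (auto simp: KT_insert)

lemma cs_zero: "(\<forall>a\<in>set l. cnt K T a = 0) \<Longrightarrow> \<forall>x\<in>set (cs K T l). x = 0"
proof (induction l arbitrary: T)
  case Nil then show ?case by simp
next
  case (Cons a l)
  have z: "cnt K T a = 0" using Cons.prems by simp
  have e: "cnt K (insert a T) = cnt K T" using zero_step[OF z] by (auto simp: cnt_def)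
  show ?case using Cons.IH[of "insert a T"] Cons.prems z e by simp
qed

lemma bubble:
  assumes "set xs \<subseteq> B" "a \<in> B" "T \<subseteq> B"
  shows "filter (\<lambda>x. x \<noteq> 0) (cs K T (xs @ a # ys)) = filter (\<lambda>x. x \<noteq> 0) (cs K T (a # xs @ ys))"
  using assms
proof (induction xs arbitrary: T)
  case Nil then show ?case by simp
next
  case (Cons x xs)
  have xB: "x \<in> B" and xsB: "set xs \<subseteq> B" using Cons.prems by auto
  have xT: "insert x T \<subseteq> B" using xB Cons.prems by auto
  have fs: "filter P (u # v # w) = filter P [u, v] @ filter P w" for P and u v :: nat and w
    by simp
  have "filter (\<lambda>x. x \<noteq> 0) (cs K T ((x # xs) @ a # ys))
      = filter (\<lambda>x. x \<noteq> 0) (cnt K T x # cs K (insert x T) (xs @ a # ys))" by simp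
  also have "\<dots> = filter (\<lambda>x. x \<noteq> 0) (cnt K T x # cs K (insert x T) (a # xs @ ys))"
    using Cons.IH[OF xsB Cons.prems(2) xT] by simp
  also have "\<dots> = filter (\<lambda>x. x \<noteq> 0) [cnt K T x, cnt K (insert x T) a] @
      filter (\<lambda>x. x \<noteq> 0) (cs K (insert a (insert x T)) (xs @ ys))" by simp
  also have "\<dots> = filter (\<lambda>x. x \<noteq> 0) [cnt K T a, cnt K (insert a T) x] @
      filter (\<lambda>x. x \<noteq> 0) (cs K (insert x (insert a T)) (xs @ ys))"
    using swap[OF Cons.prems(3) xB Cons.prems(2)] by (simp add: insert_commute)
  also have "\<dots> = filter (\<lambda>x. x \<noteq> 0) (cs K T (a # (x # xs) @ ys))" by simp
  finally show ?case .
qed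

lemma perm:
  assumes "set l \<subseteq> B" "T \<subseteq> B" "mset l' = mset l"
  shows "filter (\<lambda>x. x \<noteq> 0) (cs K T l') = filter (\<lambda>x. x \<noteq> 0) (cs K T l)"
  using assms
proof (induction l arbitrary: l' T)
  case Nil then show ?case by simp
next
  case (Cons a l)
  have "a \<in> set l'" using Cons.prems(3) by (metis list.set_intros(1) mset_eq_setD)
  then obtain xs ys where l': "l' = xs @ a # ys" using split_list by metis
  have m: "mset (xs @ ys) = mset l" using Cons.prems(3) l' by simp
  have sl': "set l' = set (a # l)" using Cons.prems(3) mset_eq_setD by blast
  have xsB: "set xs \<subseteq> B" using sl' l' Cons.prems(1) by auto
  have aB: "a \<in> B" and lB: "set l \<subseteq> B" using Cons.prems(1) by auto
  have aT: "insert a T \<subseteq> B" using aB Cons.prems(2) by auto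
  have "filter (\<lambda>x. x \<noteq> 0) (cs K T l') = filter (\<lambda>x. x \<noteq> 0) (cs K T (a # xs @ ys))"
    unfolding l' using bubble[OF xsB aB Cons.prems(2)] .
  also have "\<dots> = filter (\<lambda>x. x \<noteq> 0) (cs K T (a # l))"
    using Cons.IH[OF lB aT m] by simp
  finally show ?case .
qed

lemma greedy:
  assumes "finite R" "R \<subseteq> B" "T \<subseteq> B"
  shows "\<exists>l. distinct l \<and> set l = R \<and> Qc (cs K T l) \<and>
           ((\<exists>a\<in>R. cnt K T a > 0) \<longrightarrow> l \<noteq> [] \<and> cnt K T (hd l) > 0)"
  using assms
proof (induction R arbitrary: T rule: finite_psubset_induct)
  case (psubset R)
  show ?case
  proof (cases "\<exists>a\<in>R. cnt K T a > 0")
    case True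
    then obtain a where a: "a \<in> R" "cnt K T a > 0" by blast
    have aB: "a \<in> B" using a psubset.prems by blast
    have sub: "R - {a} \<subset> R" using a by blast
    obtain l where l: "distinct l" "set l = R - {a}" "Qc (cs K (insert a T) l)"
      using psubset.IH[OF sub, of "insert a T"] psubset.prems aB by blast
    have "Qc (cs K T (a # l))"
    proof -
      have "cs K T (a # l) = cnt K T a # cs K (insert a T) l" by simp
      moreover have "cs K (insert a T) l \<noteq> [] \<longrightarrow> hd (cs K (insert a T) l) < cnt K T a"
      proof
        assume "cs K (insert a T) l \<noteq> []"
        then obtain b l2 where bl: "l = b # l2" by (cases l) auto
        have "b \<in> B" using l(2) bl psubset.prems by auto
        then show "hd (cs K (insert a T) l) < cnt K T a"
          using strict[OF psubset.prems(2) aB _ a(2)] bl by simp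
      qed
      ultimately show ?thesis using l(3) Qc_Cons by auto
    qed
    moreover have "distinct (a # l)" "set (a # l) = R" using l a by auto
    ultimately show ?thesis using a(2) by (intro exI[of _ "a # l"]) auto
  next
    case False
    obtain l where l: "set l = R" "distinct l" using finite_distinct_list[OF psubset.hyps(1)] by blast
    have z: "\<forall>x\<in>set (cs K T l). x = 0" using cs_zero[of l T] False l by auto
    have "Qc (cs K T l)" unfolding Qc_def
    proof (intro allI impI)
      fix r assume r: "Suc r < length (cs K T l)"
      have "cs K T l ! Suc r = 0" "cs K T l ! r = 0" using z r nth_mem by (metis Suc_lessD)+
      then show "cs K T l ! Suc r \<le> cs K T l ! r \<and> (cs K T l ! Suc r = cs K T l ! r \<longrightarrow> cs K T l ! r = 0)"
        by simp
    qed
    then show ?thesis using l False by blast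
  qed
qed

end

theorem theorem3:
  fixes n :: nat and K M B :: "pauli list set"
  assumes cartan: "pauli_cartan n K M"
    and B_sub: "B \<subseteq> M"
    and B_comm: "\<forall>a\<in>B. \<forall>b\<in>B. commute a b"
    and B_conn: "\<forall>a\<in>B. \<forall>b\<in>B. same_component (K \<union> M) a b"
  shows "\<exists>bs. distinct bs \<and> set bs = B \<and>
           good_chain (kseq K bs) \<and>
           (\<forall>r \<le> length bs. (\<forall>i<r. kseq K bs ! i \<noteq> 0) \<longrightarrow>
              (\<forall>bs'. mset (take r bs') = mset (take r bs) \<and> drop r bs' = drop r bs \<longrightarrow>
                 good_chain (kseq K bs'))) \<and>
           (\<forall>bs'. mset bs' = mset bs \<longrightarrow>
              filter (\<lambda>x. x \<noteq> 0) (kseq K bs') = filter (\<lambda>x. x \<noteq> 0) (kseq K bs))"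
proof -
  interpret PC n K M B using assms by unfold_locales
  obtain bs where bs: "distinct bs" "set bs = B" "Qc (cs K {} bs)"
    "(\<exists>a\<in>B. cnt K {} a > 0) \<longrightarrow> bs \<noteq> [] \<and> cnt K {} (hd bs) > 0"
    using greedy[OF finB, of "{}"] by auto
  have good: "good_chain (cs K {} bs)"
    unfolding good_chain_def
  proof (intro conjI impI)
    assume len: "2 \<le> length (cs K {} bs)"
    then have len2: "2 \<le> length bs" by (simp add: length_cs)
    have d: "bs ! 0 \<noteq> bs ! 1"
    proof
      assume "bs ! 0 = bs ! 1"
      moreover have "bs ! 0 = bs ! 1 \<longleftrightarrow> (0::nat) = 1"
        by (rule nth_eq_iff_index_eq[OF bs(1)]) (use len2 in auto)
      ultimately show False by simp
    qed
    have l01: "0 < length bs" "1 < length bs" using len2 by auto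
    have "bs ! 0 \<in> set bs" "bs ! 1 \<in> set bs" using nth_mem[OF l01(1)] nth_mem[OF l01(2)] .
    then have b0: "bs ! 0 \<in> B" and b1: "bs ! 1 \<in> B" using bs(2) by simp_all
    obtain h where h: "h \<in> K \<union> M" "anticommute h (bs!0)" "anticommute h (bs!1)"
      using base_cn[OF b0 b1 d] by blast
    have hKT: "h \<in> KT (K \<union> M) {}" using h(1) by (simp add: KT_empty)
    obtain k where "k \<in> KT K {}" "anticommute k (bs!0)"
      using toK[OF _ hKT b0 b1 h(2) h(3)] by auto
    then have "cnt K {} (bs!0) > 0" using cnt_pos[of "{}" "bs!0"] by blast
    then have "\<exists>a\<in>B. cnt K {} a > 0" using b0 by blast
    then have pos: "cnt K {} (hd bs) > 0" using bs(4) by simp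
    have h0: "cs K {} bs ! 0 = cnt K {} (hd bs)" using len2 by (cases bs) auto
    show "cs K {} bs ! 1 < cs K {} bs ! 0"
      using bs(3)[unfolded Qc_def, rule_format, of 0] len pos h0 by auto
  next
    show "\<forall>r. Suc r < length (cs K {} bs) \<longrightarrow>
        cs K {} bs ! Suc r \<le> cs K {} bs ! r \<and> (cs K {} bs ! Suc r = cs K {} bs ! r \<longrightarrow> cs K {} bs ! r = 0)"
      using bs(3) unfolding Qc_def by blast
  qed
  have c3: "filter (\<lambda>x. x \<noteq> 0) (cs K {} bs') = filter (\<lambda>x. x \<noteq> 0) (cs K {} bs)"
    if "mset bs' = mset bs" for bs'
    using perm[of bs "{}" bs'] bs(2) that by simp
  have c2: "good_chain (cs K {} bs')"
    if r: "r \<le> length bs" and nz: "\<forall>i<r. cs K {} bs ! i \<noteq> 0"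
      and m: "mset (take r bs') = mset (take r bs)" and dr: "drop r bs' = drop r bs" for r bs'
  proof -
    have st: "set (take r bs') = set (take r bs)" by (rule mset_eq_setD[OF m])
    have e1: "cs K {} bs' = cs K {} (take r bs') @ cs K (set (take r bs')) (drop r bs')"
      using cs_append[of K "{}" "take r bs'" "drop r bs'"] by simp
    have e2: "cs K {} bs = cs K {} (take r bs) @ cs K (set (take r bs)) (drop r bs)"
      using cs_append[of K "{}" "take r bs" "drop r bs"] by simp
    have lt: "length (take r bs) = r" using r by simp
    have lt': "length (take r bs') = r"
    proof -
      have "size (mset (take r bs')) = size (mset (take r bs))" using m by simp
      then show ?thesis using lt by simp
    qed
    have tk: "cs K {} (take r bs) = take r (cs K {} bs)"
      using e2 lt by (simp add: length_cs)
    have allnz: "\<forall>x\<in>set (cs K {} (take r bs)). x \<noteq> 0"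
    proof
      fix x assume "x \<in> set (cs K {} (take r bs))"
      then obtain i where i: "i < length (take r (cs K {} bs))" "take r (cs K {} bs) ! i = x"
        unfolding tk in_set_conv_nth by blast
      then have "i < r" "x = cs K {} bs ! i" by simp_all
      then show "x \<noteq> 0" using nz by simp
    qed
    have tB: "set (take r bs) \<subseteq> B" using set_take_subset[of r bs] unfolding bs(2) .
    have f: "filter (\<lambda>x. x \<noteq> 0) (cs K {} (take r bs')) = cs K {} (take r bs)"
      using perm[OF tB _ m, of "{}"] allnz filter_id_conv[THEN iffD2, OF allnz] by simp
    have "length (filter (\<lambda>x. x \<noteq> 0) (cs K {} (take r bs'))) = length (cs K {} (take r bs'))"
      using f lt lt' by (simp add: length_cs)
    then have "\<forall>x\<in>set (cs K {} (take r bs')). x \<noteq> 0"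
    proof (intro ballI)
      fix x assume x: "x \<in> set (cs K {} (take r bs'))"
      show "x \<noteq> 0"
      proof
        assume "x = 0"
        then have "length (filter (\<lambda>x. x \<noteq> 0) (cs K {} (take r bs'))) < length (cs K {} (take r bs'))"
          using length_filter_less[OF x] by simp
        then show False using \<open>length (filter (\<lambda>x. x \<noteq> 0) (cs K {} (take r bs'))) = length (cs K {} (take r bs'))\<close> by simp
      qed
    qed
    then have "filter (\<lambda>x. x \<noteq> 0) (cs K {} (take r bs')) = cs K {} (take r bs')"
      by (simp add: filter_id_conv)
    then have "cs K {} (take r bs') = cs K {} (take r bs)" using f by simp
    then have "cs K {} bs' = cs K {} bs" using e1 e2 st dr by simp
    then show ?thesis using good by simp
  qed
  show ?thesis
    unfolding kseq_cs
  proof (intro exI[of _ bs] conjI allI impI)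
    show "distinct bs" "set bs = B" "good_chain (cs K {} bs)" using bs(1,2) good by simp_all
  next
    fix bs' assume "mset bs' = mset bs"
    then show "filter (\<lambda>x. x \<noteq> 0) (cs K {} bs') = filter (\<lambda>x. x \<noteq> 0) (cs K {} bs)" by (rule c3)
  next
    fix r bs' assume "r \<le> length bs" "\<forall>i<r. cs K {} bs ! i \<noteq> 0"
      "mset (take r bs') = mset (take r bs) \<and> drop r bs' = drop r bs"
    then show "good_chain (cs K {} bs')" using c2 by blast
  qed
qed

end
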